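(* Let $G=(V,E,w)$ be an undirected graph with non-negative edge weights, $\mathcal L\subseteq V$ a set of labeled vertices and $k\ge1$. For every $v\in V$ let $\mathcal L_v$ be the set of labeled vertices in the connected component of $v$ and $\ell_v=\min\{k,|\mathcal L_v|\}$. Then (1) Algorithm 1 (described in the context) stops after a finite number of steps; (2) once it stops, for every $v\in V$ the output list is $\mathrm{kNN}[v]=[(d_G(s_1,v),s_1),\dots,(d_G(s_{\ell_v},v),s_{\ell_v})]$, where $s_1,\dots,s_{\ell_v}$ are the $\ell_v$ nearest labeled vertices to $v$, sorted by their distance to $v$.
   Context: $d_G$ is the shortest-path distance in $G$. Algorithm 1: it maintains a min-priority queue $Q$ of pairs $(\mathrm{seed},v)\in\mathcal L\times V$ with priorities, and for each $v\in V$ a list kNN$[v]$ (initially empty) and a set $S_v$ (initially empty). Initially, for each $s\in\mathcal L$, $(s,s)$ is inserted with priority $0$. While $Q$ is nonempty: pop the pair $(\mathrm{seed},v_0)$ of minimum priority $\mathrm{dist}$; add $\mathrm{seed}$ to $S_{v_0}$; if kNN$[v_0]$ has fewer than $k$ entries, append $(\mathrm{dist},\mathrm{seed})$ to kNN$[v_0]$ and, for every neighbour $v$ of $v_0$ such that kNN$[v]$ has fewer than $k$ entries and $\mathrm{seed}\notin S_v$, perform decrease-or-insert of $(\mathrm{seed},v)$ with priority $\mathrm{dist}+w(v_0,v)$ (if the pair is in $Q$ its priority is lowered to this value when smaller; otherwise it is inserted). *)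

theory Defs
  imports Complex_Main
begin

text \<open>A graph is given by a vertex set V, an edge relation E (symmetric for an
undirected graph) and a weight function w on pairs of vertices.\<close>

definition is_walk :: "'v set \<Rightarrow> ('v \<times> 'v) set \<Rightarrow> 'v list \<Rightarrow> bool" where
  "is_walk V E p \<longleftrightarrow> p \<noteq> [] \<and> set p \<subseteq> V \<and>
     (\<forall>i. Suc i < length p \<longrightarrow> (p ! i, p ! Suc i) \<in> E)"

definition walk_weight :: "('v \<Rightarrow> 'v \<Rightarrow> real) \<Rightarrow> 'v list \<Rightarrow> real" where
  "walk_weight w p = sum_list (map (\<lambda>(a, b). w a b) (zip p (tl p)))"

definition connected_in :: "'v set \<Rightarrow> ('v \<times> 'v) set \<Rightarrow> 'v \<Rightarrow> 'v \<Rightarrow> bool" where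
  "connected_in V E s v \<longleftrightarrow> (\<exists>p. is_walk V E p \<and> hd p = s \<and> last p = v)"

definition gdist :: "'v set \<Rightarrow> ('v \<times> 'v) set \<Rightarrow> ('v \<Rightarrow> 'v \<Rightarrow> real) \<Rightarrow> 'v \<Rightarrow> 'v \<Rightarrow> real" where
  "gdist V E w s v = Inf {walk_weight w p | p. is_walk V E p \<and> hd p = s \<and> last p = v}"

text \<open>State: the priority queue Q is a finite map from pairs (seed, v) to
priorities; knn v is the output list of v; S v is the set S_v.\<close>
record 'v alg_state =
  Q   :: "('v \<times> 'v) \<Rightarrow> real option"
  knn :: "'v \<Rightarrow> (real \<times> 'v) list"
  S   :: "'v \<Rightarrow> 'v set"

definition alg_init :: "'v set \<Rightarrow> 'v alg_state" where
  "alg_init L = \<lparr> Q = (\<lambda>(s, v). if s \<in> L \<and> v = s then Some 0 else None),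
                  knn = (\<lambda>_. []), S = (\<lambda>_. {}) \<rparr>"

text \<open>One iteration of the while loop: pop a pair (seed, v0) of minimum priority
dist (ties broken arbitrarily, hence a relation), add seed to S_v0, and if
kNN[v0] has fewer than k entries, append (dist, seed) and decrease-or-insert
(seed, v) with priority dist + w v0 v for every neighbour v of v0 with
|kNN[v]| < k and seed not in S_v.\<close>
definition alg_step ::
  "('v \<times> 'v) set \<Rightarrow> ('v \<Rightarrow> 'v \<Rightarrow> real) \<Rightarrow> nat \<Rightarrow> 'v alg_state \<Rightarrow> 'v alg_state \<Rightarrow> bool" where
  "alg_step E w k st st' \<longleftrightarrow>
     (\<exists>seed v0 d.
        Q st (seed, v0) = Some d \<and>
        (\<forall>x p. Q st x = Some p \<longrightarrow> d \<le> p) \<and>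
        (let Q1 = (Q st)((seed, v0) := None);
             S1 = (S st)(v0 := insert seed (S st v0))
         in if length (knn st v0) < k then
              (let knn1 = (knn st)(v0 := knn st v0 @ [(d, seed)])
               in st' = \<lparr> Q = (\<lambda>(s, v).
                              if s = seed \<and> (v0, v) \<in> E \<and> length (knn1 v) < k \<and> seed \<notin> S1 v
                              then (case Q1 (s, v) of
                                      None \<Rightarrow> Some (d + w v0 v)
                                    | Some p \<Rightarrow> Some (min p (d + w v0 v)))
                              else Q1 (s, v)),
                          knn = knn1, S = S1 \<rparr>)
            else st' = \<lparr> Q = Q1, knn = knn st, S = S1 \<rparr>))"

definition alg_stopped :: "'v alg_state \<Rightarrow> bool" where
  "alg_stopped st \<longleftrightarrow> Q st = Map.empty"

end

theory Submission
  imports Defs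
begin

lemma walk_weight_single[simp]: "walk_weight w [a] = 0"
  by (simp add: walk_weight_def)
lemma walk_weight_cons2[simp]: "walk_weight w (a # b # ys) = w a b + walk_weight w (b # ys)"
  by (simp add: walk_weight_def)
lemma is_walk_Nil[simp]: "\<not> is_walk V E []"
  by (simp add: is_walk_def)
lemma is_walk_single[simp]: "is_walk V E [a] \<longleftrightarrow> a \<in> V"
  by (simp add: is_walk_def)
lemma is_walk_cons2[simp]:
  "is_walk V E (a # b # ys) \<longleftrightarrow> a \<in> V \<and> (a,b) \<in> E \<and> is_walk V E (b # ys)"
proof
  assume H: "is_walk V E (a # b # ys)"
  have h: "\<And>i. Suc i < length (a#b#ys) \<Longrightarrow> ((a#b#ys) ! i, (a#b#ys) ! Suc i) \<in> E"
    using H by (simp add: is_walk_def)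
  show "a \<in> V \<and> (a,b) \<in> E \<and> is_walk V E (b # ys)"
    using H h[of 0] h[of "Suc i" for i] unfolding is_walk_def by auto
next
  assume H: "a \<in> V \<and> (a,b) \<in> E \<and> is_walk V E (b # ys)"
  show "is_walk V E (a # b # ys)" unfolding is_walk_def
  proof (intro conjI allI impI)
    fix i assume "Suc i < length (a # b # ys)"
    then show "((a # b # ys) ! i, (a # b # ys) ! Suc i) \<in> E"
      using H unfolding is_walk_def by (cases i) auto
  qed (use H in \<open>auto simp: is_walk_def\<close>)
qed

lemma walk_snoc:
  "q \<noteq> [] \<Longrightarrow> is_walk V E (q @ [v]) \<longleftrightarrow> is_walk V E q \<and> (last q, v) \<in> E \<and> v \<in> V"
  by (induction q rule: induct_list012) auto

lemma weight_snoc: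
  "q \<noteq> [] \<Longrightarrow> walk_weight w (q @ [v]) = walk_weight w q + w (last q) v"
  by (induction q rule: induct_list012) auto

lemma walk_weight_nonneg:
  "is_walk V E p \<Longrightarrow> (\<And>u v. (u,v)\<in>E \<Longrightarrow> 0 \<le> w u v) \<Longrightarrow> 0 \<le> walk_weight w p"
  by (induction p rule: induct_list012) (auto simp: add_nonneg_nonneg)

lemma walk_nonempty: "is_walk V E p \<Longrightarrow> p \<noteq> []"
  by (simp add: is_walk_def)

locale kg =
  fixes V :: "'v set" and E :: "('v \<times> 'v) set" and w :: "'v \<Rightarrow> 'v \<Rightarrow> real"
    and L :: "'v set" and k :: nat
  assumes finV: "finite V" and E_sub: "E \<subseteq> V \<times> V"
    and w_nonneg: "\<And>u v. (u, v) \<in> E \<Longrightarrow> 0 \<le> w u v"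
    and L_sub: "L \<subseteq> V"
begin

definition reach where
  "reach s v p \<longleftrightarrow> (\<exists>q. is_walk V E q \<and> hd q = s \<and> last q = v \<and> walk_weight w q \<le> p)"

lemma reach_mono: "reach s v p \<Longrightarrow> p \<le> p' \<Longrightarrow> reach s v p'"
  unfolding reach_def by force

lemma reach_refl: "s \<in> V \<Longrightarrow> reach s s 0"
  unfolding reach_def by (intro exI[of _ "[s]"]) auto

lemma reach_ext: assumes "reach s u p" "(u,v) \<in> E" shows "reach s v (p + w u v)"
proof -
  obtain q where q: "is_walk V E q" "hd q = s" "last q = u" "walk_weight w q \<le> p"
    using assms(1) unfolding reach_def by blast
  have ne: "q \<noteq> []" using q(1) by (rule walk_nonempty)
  have "v \<in> V" using assms(2) E_sub by auto
  then have "is_walk V E (q @ [v])" using walk_snoc[OF ne] q assms(2) by auto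
  moreover have "walk_weight w (q @ [v]) \<le> p + w u v" using weight_snoc[OF ne] q by simp
  ultimately show ?thesis unfolding reach_def using ne q
    by (intro exI[of _ "q @ [v]"]) auto
qed

definition Rd where
  "Rd st s u W \<longleftrightarrow> (\<exists>d. (d,s) \<in> set (knn st u) \<and> d \<le> W)
      \<or> (k \<le> length (knn st u) \<and> (\<forall>e\<in>set (knn st u). fst e \<le> W))"

definition Pnd where
  "Pnd st s u W \<longleftrightarrow> Rd st s u W \<or> (\<exists>q. Q st (s,u) = Some q \<and> q \<le> W)"

definition invar where "invar st \<longleftrightarrow>
 (\<forall>s v p. Q st (s,v) = Some p \<longrightarrow> s \<in> L \<and> v \<in> V \<and> s \<notin> S st v \<and> reach s v p) \<and>
 (\<forall>v e. e \<in> set (knn st v) \<longrightarrow> snd e \<in> L \<and> reach (snd e) v (fst e) \<and> snd e \<in> S st v) \<and>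
 (\<forall>v. distinct (map snd (knn st v)) \<and> sorted (map fst (knn st v)) \<and> length (knn st v) \<le> k) \<and>
 (\<forall>v s. s \<in> S st v \<longrightarrow> s \<in> snd ` set (knn st v) \<or> k \<le> length (knn st v)) \<and>
 (\<forall>v e x p. e \<in> set (knn st v) \<longrightarrow> Q st x = Some p \<longrightarrow> fst e \<le> p) \<and>
 (\<forall>s\<in>L. Pnd st s s 0) \<and>
 (\<forall>v e u. e \<in> set (knn st v) \<longrightarrow> (v,u) \<in> E \<longrightarrow> Pnd st (snd e) u (fst e + w v u))"

lemma step_elim:
  assumes "alg_step E w k st st'"
  obtains (app) seed v0 d where "Q st (seed,v0) = Some d" "\<forall>x p. Q st x = Some p \<longrightarrow> d \<le> p"
    "S st' = (S st)(v0 := insert seed (S st v0))"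
    "length (knn st v0) < k" "knn st' = (knn st)(v0 := knn st v0 @ [(d,seed)])"
    "Q st' = (\<lambda>(s,v). if s = seed \<and> (v0,v) \<in> E \<and> length (knn st' v) < k \<and> seed \<notin> S st' v
        then (case ((Q st)((seed,v0):=None)) (s,v) of None \<Rightarrow> Some (d + w v0 v)
              | Some p \<Rightarrow> Some (min p (d + w v0 v)))
        else ((Q st)((seed,v0):=None)) (s,v))"
  | (full) seed v0 d where "Q st (seed,v0) = Some d" "\<forall>x p. Q st x = Some p \<longrightarrow> d \<le> p"
    "S st' = (S st)(v0 := insert seed (S st v0))"
    "\<not> length (knn st v0) < k" "knn st' = knn st" "Q st' = (Q st)((seed,v0):=None)"
proof -
  obtain seed v0 d where H: "Q st (seed,v0) = Some d" "\<forall>x p. Q st x = Some p \<longrightarrow> d \<le> p"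
    and R: "(let Q1 = (Q st)((seed, v0) := None);
             S1 = (S st)(v0 := insert seed (S st v0))
         in if length (knn st v0) < k then
              (let knn1 = (knn st)(v0 := knn st v0 @ [(d, seed)])
               in st' = \<lparr> Q = (\<lambda>(s, v).
                              if s = seed \<and> (v0, v) \<in> E \<and> length (knn1 v) < k \<and> seed \<notin> S1 v
                              then (case Q1 (s, v) of
                                      None \<Rightarrow> Some (d + w v0 v)
                                    | Some p \<Rightarrow> Some (min p (d + w v0 v)))
                              else Q1 (s, v)),
                          knn = knn1, S = S1 \<rparr>)
            else st' = \<lparr> Q = Q1, knn = knn st, S = S1 \<rparr>)"
    using assms unfolding alg_step_def by blast
  show ?thesis
  proof (cases "length (knn st v0) < k")
    case True
    then have st': "st' = \<lparr> Q = (\<lambda>(s, v).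
                              if s = seed \<and> (v0, v) \<in> E \<and> length (((knn st)(v0 := knn st v0 @ [(d, seed)])) v) < k \<and> seed \<notin> ((S st)(v0 := insert seed (S st v0))) v
                              then (case ((Q st)((seed, v0) := None)) (s, v) of
                                      None \<Rightarrow> Some (d + w v0 v)
                                    | Some p \<Rightarrow> Some (min p (d + w v0 v)))
                              else ((Q st)((seed, v0) := None)) (s, v)),
                          knn = (knn st)(v0 := knn st v0 @ [(d, seed)]), S = (S st)(v0 := insert seed (S st v0)) \<rparr>"
      using R by (simp add: Let_def)
    show ?thesis by (rule app[OF H]) (use True in \<open>simp_all add: st'\<close>)
  next
    case False
    then have st': "st' = \<lparr> Q = (Q st)((seed, v0) := None), knn = knn st, S = (S st)(v0 := insert seed (S st v0)) \<rparr>"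
      using R by (simp add: Let_def)
    show ?thesis by (rule full[OF H]) (use False in \<open>simp_all add: st'\<close>)
  qed
qed


lemma invar_init: "invar (alg_init L)"
  unfolding invar_def Pnd_def alg_init_def using L_sub
  by (auto intro: reach_refl)

lemma invar_step:
  assumes inv: "invar st" and step: "alg_step E w k st st'"
  shows "invar st'"
proof -
  have I1: "\<And>s v p. Q st (s,v) = Some p \<Longrightarrow> s \<in> L \<and> v \<in> V \<and> s \<notin> S st v \<and> reach s v p"
    using inv unfolding invar_def by blast
  have I2: "\<And>v e. e \<in> set (knn st v) \<Longrightarrow> snd e \<in> L \<and> reach (snd e) v (fst e) \<and> snd e \<in> S st v"
    using inv unfolding invar_def by blast
  have I3: "\<And>v. distinct (map snd (knn st v)) \<and> sorted (map fst (knn st v)) \<and> length (knn st v) \<le> k"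
    using inv unfolding invar_def by blast
  have I4: "\<And>v s. s \<in> S st v \<Longrightarrow> s \<in> snd ` set (knn st v) \<or> k \<le> length (knn st v)"
    using inv unfolding invar_def by blast
  have I5: "\<And>v e x p. e \<in> set (knn st v) \<Longrightarrow> Q st x = Some p \<Longrightarrow> fst e \<le> p"
    using inv unfolding invar_def by blast
  have I6: "\<And>s. s\<in>L \<Longrightarrow> Pnd st s s 0"
    using inv unfolding invar_def by blast
  have I7: "\<And>v e u. e \<in> set (knn st v) \<Longrightarrow> (v,u) \<in> E \<Longrightarrow> Pnd st (snd e) u (fst e + w v u)"
    using inv unfolding invar_def by blast
  from step show ?thesis
  proof (cases rule: step_elim)
    case (app seed v0 d)
    note hQ = app(1) and hmin = app(2) and hS = app(3) and hlen = app(4) and hK = app(5) and hQ' = app(6)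
    have sL: "seed \<in> L" "v0 \<in> V" "seed \<notin> S st v0" "reach seed v0 d" using I1[OF hQ] by auto
    have dge: "\<And>v e. e \<in> set (knn st v) \<Longrightarrow> fst e \<le> d" using I5 hQ by blast
    have N1: "\<And>s v p'. Q st' (s,v) = Some p' \<Longrightarrow> ((s,v) \<noteq> (seed,v0) \<and> Q st (s,v) = Some p')
       \<or> (s = seed \<and> (v0,v) \<in> E \<and> seed \<notin> S st' v \<and> (p' = d + w v0 v \<or>
           (\<exists>p. (s,v) \<noteq> (seed,v0) \<and> Q st (s,v) = Some p \<and> p' = min p (d + w v0 v))))"
      using hQ' by (auto split: if_splits option.splits)
    have N2: "\<And>s v q. Q st (s,v) = Some q \<Longrightarrow> (s,v) \<noteq> (seed,v0) \<Longrightarrow> \<exists>q'. Q st' (s,v) = Some q' \<and> q' \<le> q"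
      using hQ' by (auto split: if_splits option.splits)
    have N3: "\<And>u. (v0,u) \<in> E \<Longrightarrow> length (knn st' u) < k \<Longrightarrow> seed \<notin> S st' u \<Longrightarrow>
        \<exists>q'. Q st' (seed,u) = Some q' \<and> q' \<le> d + w v0 u"
      using hQ' by (auto split: if_splits option.splits)
    have Rst: "Rd st' s u W" if "Rd st s u W" for s u W
    proof (cases "u = v0")
      case True
      then show ?thesis using that hlen I3[of v0] unfolding Rd_def hK by auto
    next
      case False
      then show ?thesis using that unfolding Rd_def hK by auto
    qed
    have Pst: "Pnd st' s u W" if "Pnd st s u W" for s u W
    proof -
      { assume "Rd st s u W" then have ?thesis using Rst unfolding Pnd_def by blast }
      moreover
      { fix q assume q: "Q st (s,u) = Some q" "q \<le> W"
        have ?thesis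
        proof (cases "(s,u) = (seed,v0)")
          case True
          then have "q = d" using q hQ by simp
          then have "Rd st' s u W" using True q unfolding Rd_def hK by auto
          then show ?thesis unfolding Pnd_def by blast
        next
          case False
          then show ?thesis using N2[OF q(1) False] q unfolding Pnd_def by force
        qed }
      ultimately show ?thesis using that unfolding Pnd_def by blast
    qed
    have newP: "Pnd st' seed u (d + w v0 u)" if E0: "(v0,u) \<in> E" for u
    proof -
      have wn: "0 \<le> w v0 u" using w_nonneg E0 .
      consider (a) "length (knn st' u) < k" "seed \<notin> S st' u" | (b) "k \<le> length (knn st' u)"
        | (c) "seed \<in> S st' u" by linarith
      then show ?thesis
      proof cases
        case a then show ?thesis using N3[OF E0] unfolding Pnd_def by blast
      next
        case b
        have "\<forall>e\<in>set (knn st' u). fst e \<le> d + w v0 u"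
          using dge wn unfolding hK by (force split: if_splits)
        then show ?thesis using b unfolding Pnd_def Rd_def by blast
      next
        case c
        show ?thesis
        proof (cases "u = v0")
          case True
          then show ?thesis using wn unfolding Pnd_def Rd_def hK by auto
        next
          case False
          then have "seed \<in> S st u" using c hS by simp
          from I4[OF this] show ?thesis
          proof
            assume "seed \<in> snd ` set (knn st u)"
            then obtain d'' where "(d'', seed) \<in> set (knn st u)" by force
            moreover have "d'' \<le> d" using dge[OF calculation] by simp
            ultimately show ?thesis using False wn unfolding Pnd_def Rd_def hK by force
          next
            assume "k \<le> length (knn st u)"
            then show ?thesis using False wn dge unfolding Pnd_def Rd_def hK by force
          qed
        qed
      qed
    qed
    show ?thesis unfolding invar_def
    proof (intro conjI; intro allI impI ballI)
      fix s v p assume Qp: "Q st' (s,v) = Some p"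
      show "s \<in> L \<and> v \<in> V \<and> s \<notin> S st' v \<and> reach s v p"
      proof (cases "(s,v) \<noteq> (seed,v0) \<and> Q st (s,v) = Some p")
        case True
        then show ?thesis using I1[of s v p] hS by auto
      next
        case False
        have H: "s = seed \<and> (v0,v) \<in> E \<and> seed \<notin> S st' v \<and> (p = d + w v0 v \<or>
           (\<exists>p'. (s,v) \<noteq> (seed,v0) \<and> Q st (s,v) = Some p' \<and> p = min p' (d + w v0 v)))"
          using N1[OF Qp] False by blast
        have r: "reach seed v (d + w v0 v)" using reach_ext[OF sL(4)] H by blast
        have "reach s v p"
        proof (cases "p = d + w v0 v")
          case True then show ?thesis using r H by simp
        next
          case False
          then obtain p' where p': "Q st (s,v) = Some p'" "p = min p' (d + w v0 v)" using H by blast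
          then show "reach s v p" using r I1[of s v p'] H by (cases "p' \<le> d + w v0 v") (auto simp: min_def)
        qed
        then show ?thesis using H sL E_sub by auto
      qed
    next
      fix v e assume "e \<in> set (knn st' v)"
      then show "snd e \<in> L \<and> reach (snd e) v (fst e) \<and> snd e \<in> S st' v"
        using I2[of e v] sL unfolding hK hS by (auto split: if_splits)
    next
      fix v
      have A: "distinct (map snd (knn st' v))"
      proof (cases "v = v0")
        case True
        have "seed \<notin> snd ` set (knn st v0)" using I2[of _ v0] sL(3) by force
        then show ?thesis using True I3[of v0] unfolding hK by auto
      qed (use I3 hK in auto)
      have B: "sorted (map fst (knn st' v))"
      proof (cases "v = v0")
        case True
        then show ?thesis using I3[of v0] dge[of _ v0] unfolding hK by (auto simp: sorted_append)
      qed (use I3 hK in auto)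
      have C: "length (knn st' v) \<le> k" using I3[of v] hlen unfolding hK by auto
      show "distinct (map snd (knn st' v)) \<and> sorted (map fst (knn st' v)) \<and> length (knn st' v) \<le> k"
        using A B C by blast
    next
      fix v s assume "s \<in> S st' v"
      then show "s \<in> snd ` set (knn st' v) \<or> k \<le> length (knn st' v)"
        using I4[of s v] unfolding hS hK by (force split: if_splits)
    next
      fix v e x p assume e: "e \<in> set (knn st' v)" and Qp: "Q st' x = Some p"
      have "fst e \<le> d"
      proof (cases "v = v0")
        case True then show ?thesis using e dge[of e v0] unfolding hK by auto
      next
        case False then show ?thesis using e dge[of e v] unfolding hK by auto
      qed
      moreover obtain s0 v1 where x: "x = (s0,v1)" by force
      have "d \<le> p"
        using N1[OF Qp[unfolded x]] hmin w_nonneg by force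
      ultimately show "fst e \<le> p" by simp
    next
      fix s assume "s \<in> L" then show "Pnd st' s s 0" using I6 Pst by blast
    next
      fix v e u assume e: "e \<in> set (knn st' v)" and E1: "(v,u) \<in> E"
      show "Pnd st' (snd e) u (fst e + w v u)"
      proof (cases "e \<in> set (knn st v)")
        case True then show ?thesis using I7 E1 Pst by blast
      next
        case False
        then have "v = v0" "e = (d, seed)" using e unfolding hK by (auto split: if_splits)
        then show ?thesis using newP E1 by simp
      qed
    qed
  next
    case (full seed v0 d)
    note hQ = full(1) and hmin = full(2) and hS = full(3) and hlen = full(4) and hK = full(5) and hQ' = full(6)
    have dge: "\<And>v e. e \<in> set (knn st v) \<Longrightarrow> fst e \<le> d" using I5 hQ by blast
    have Pst: "Pnd st' s u W" if "Pnd st s u W" for s u W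
    proof -
      { assume "Rd st s u W" then have ?thesis unfolding Pnd_def Rd_def hK by blast }
      moreover
      { fix q assume q: "Q st (s,u) = Some q" "q \<le> W"
        have ?thesis
        proof (cases "(s,u) = (seed,v0)")
          case True
          then have "q = d" using q hQ by simp
          then have "Rd st' s u W" using True q hlen dge unfolding Rd_def hK by force
          then show ?thesis unfolding Pnd_def by blast
        next
          case False
          then show ?thesis using q unfolding Pnd_def hQ' by auto
        qed }
      ultimately show ?thesis using that unfolding Pnd_def by blast
    qed
    show ?thesis unfolding invar_def
    proof (intro conjI; intro allI impI ballI)
      fix s v p assume Qp: "Q st' (s,v) = Some p"
      then show "s \<in> L \<and> v \<in> V \<and> s \<notin> S st' v \<and> reach s v p"
        using I1[of s v p] unfolding hQ' hS by (auto split: if_splits)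
    next
      fix v e assume "e \<in> set (knn st' v)"
      then show "snd e \<in> L \<and> reach (snd e) v (fst e) \<and> snd e \<in> S st' v"
        using I2[of e v] unfolding hK hS by auto
    next
      fix v show "distinct (map snd (knn st' v)) \<and> sorted (map fst (knn st' v)) \<and> length (knn st' v) \<le> k"
        using I3 unfolding hK by blast
    next
      fix v s assume "s \<in> S st' v"
      then show "s \<in> snd ` set (knn st' v) \<or> k \<le> length (knn st' v)"
        using I4[of s v] hlen unfolding hS hK by (auto split: if_splits)
    next
      fix v e x p assume "e \<in> set (knn st' v)" "Q st' x = Some p"
      then show "fst e \<le> p" using I5 unfolding hK hQ' by (auto split: if_splits)
    next
      fix s assume "s \<in> L" then show "Pnd st' s s 0" using I6 Pst by blast
    next
      fix v e u assume "e \<in> set (knn st' v)" "(v,u) \<in> E"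
      then show "Pnd st' (snd e) u (fst e + w v u)" using I7 Pst unfolding hK by blast
    qed
  qed
qed


lemma reach_invar: "(alg_step E w k)\<^sup>*\<^sup>* (alg_init L) st \<Longrightarrow> invar st"
  by (induction rule: rtranclp_induct) (auto intro: invar_init invar_step)

definition mu where "mu st = card {(s,v). s \<in> L \<and> v \<in> V \<and> s \<notin> S st v}"

lemma mu_dec: assumes inv: "invar st" and step: "alg_step E w k st st'" shows "mu st' < mu st"
proof -
  obtain seed v0 d where h: "Q st (seed,v0) = Some d" "S st' = (S st)(v0 := insert seed (S st v0))"
    using step by (cases rule: step_elim) blast+
  have i: "seed \<in> L" "v0 \<in> V" "seed \<notin> S st v0" using h(1) inv unfolding invar_def by blast+
  let ?A = "{(s,v). s \<in> L \<and> v \<in> V \<and> s \<notin> S st v}"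
  let ?B = "{(s,v). s \<in> L \<and> v \<in> V \<and> s \<notin> S st' v}"
  have fin: "finite ?A"
    by (rule finite_subset[of _ "L \<times> V"]) (use finV L_sub finite_subset in auto)
  have "?B \<subset> ?A" using h(2) i by auto
  then show ?thesis unfolding mu_def using psubset_card_mono[OF fin] by blast
qed

lemma no_inf: "\<nexists>f. f 0 = alg_init L \<and> (\<forall>i. alg_step E w k (f i) (f (Suc i)))"
proof
  assume "\<exists>f. f 0 = alg_init L \<and> (\<forall>i. alg_step E w k (f i) (f (Suc i)))"
  then obtain f where f0: "f 0 = alg_init L" and fs: "\<And>i. alg_step E w k (f i) (f (Suc i))" by blast
  have r: "(alg_step E w k)\<^sup>*\<^sup>* (alg_init L) (f i)" for i
  proof (induction i)
    case 0 then show ?case using f0 by simp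
  next
    case (Suc i) then show ?case using fs[of i] by (simp add: rtranclp.rtrancl_into_rtrancl)
  qed
  have m: "mu (f i) + i \<le> mu (f 0)" for i
  proof (induction i)
    case 0 then show ?case by simp
  next
    case (Suc i) then show ?case using mu_dec[OF reach_invar[OF r[of i]] fs[of i]] by simp
  qed
  from m[of "Suc (mu (f 0))"] show False by simp
qed

lemma stuck: assumes inv: "invar st" and ns: "\<not> (\<exists>st'. alg_step E w k st st')"
  shows "alg_stopped st"
proof (rule ccontr)
  assume "\<not> alg_stopped st"
  then have ne: "Q st \<noteq> Map.empty" unfolding alg_stopped_def .
  have "dom (Q st) \<subseteq> L \<times> V" using inv unfolding invar_def by auto
  then have fd: "finite (dom (Q st))" by (rule finite_subset) (use finV L_sub finite_subset in auto)
  have fr: "finite (ran (Q st))" using finite_ran[OF fd] .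
  obtain x0 where "Q st x0 \<noteq> None" using ne by (auto simp: fun_eq_iff)
  then obtain y0 where "Q st x0 = Some y0" by auto
  then have "y0 \<in> ran (Q st)" by (rule ranI)
  then have rne: "ran (Q st) \<noteq> {}" by blast
  define d where "d = Min (ran (Q st))"
  have "d \<in> ran (Q st)" unfolding d_def using Min_in[OF fr rne] .
  then obtain seed v0 where hQ: "Q st (seed,v0) = Some d" by (auto simp: ran_def)
  have hmin: "\<forall>x p. Q st x = Some p \<longrightarrow> d \<le> p"
    unfolding d_def using fr by (auto intro: Min_le simp: ran_def)
  define st' where "st' = (let Q1 = (Q st)((seed, v0) := None);
             S1 = (S st)(v0 := insert seed (S st v0))
         in if length (knn st v0) < k then
              (let knn1 = (knn st)(v0 := knn st v0 @ [(d, seed)])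
               in \<lparr> Q = (\<lambda>(s, v).
                              if s = seed \<and> (v0, v) \<in> E \<and> length (knn1 v) < k \<and> seed \<notin> S1 v
                              then (case Q1 (s, v) of
                                      None \<Rightarrow> Some (d + w v0 v)
                                    | Some p \<Rightarrow> Some (min p (d + w v0 v)))
                              else Q1 (s, v)),
                          knn = knn1, S = S1 \<rparr>)
            else \<lparr> Q = Q1, knn = knn st, S = S1 \<rparr>)"
  have "alg_step E w k st st'"
    unfolding alg_step_def
    apply (rule exI[of _ seed], rule exI[of _ v0], rule exI[of _ d])
    using hQ hmin by (simp add: st'_def Let_def)
  then show False using ns by blast
qed

lemma Rd_mono: "Rd st s u W \<Longrightarrow> W \<le> W' \<Longrightarrow> Rd st s u W'"
  unfolding Rd_def by force

lemma final_walk: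
  assumes inv: "invar st" and em: "Q st = Map.empty"
  shows "is_walk V E p \<Longrightarrow> hd p \<in> L \<Longrightarrow> Rd st (hd p) (last p) (walk_weight w p)"
proof (induction p rule: rev_induct)
  case Nil then show ?case by simp
next
  case (snoc v q)
  have I3: "\<And>v. distinct (map snd (knn st v)) \<and> sorted (map fst (knn st v)) \<and> length (knn st v) \<le> k"
    using inv unfolding invar_def by blast
  have I6: "\<And>s. s\<in>L \<Longrightarrow> Rd st s s 0"
    using inv em unfolding invar_def Pnd_def by auto
  have I7: "\<And>v e u. e \<in> set (knn st v) \<Longrightarrow> (v,u) \<in> E \<Longrightarrow> Rd st (snd e) u (fst e + w v u)"
    using inv em unfolding invar_def Pnd_def by auto
  show ?case
  proof (cases "q = []")
    case True then show ?thesis using snoc I6 by simp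
  next
    case False
    have wq: "is_walk V E q" "(last q, v) \<in> E" using snoc(2) walk_snoc[OF False] by auto
    have hq: "hd (q @ [v]) = hd q" using False by simp
    define s where "s = hd q"
    define u where "u = last q"
    define Wq where "Wq = walk_weight w q"
    define W where "W = Wq + w u v"
    have WW: "walk_weight w (q @ [v]) = W" unfolding W_def Wq_def u_def using weight_snoc[OF False] by simp
    have IH: "Rd st s u Wq" using snoc(1)[OF wq(1)] snoc(3) hq unfolding s_def u_def Wq_def by simp
    have uvE: "(u,v) \<in> E" using wq(2) unfolding u_def .
    have ext: "Rd st (snd e) v W" if "e \<in> set (knn st u)" "fst e \<le> Wq" for e
      using Rd_mono[OF I7[OF that(1) uvE]] that(2) unfolding W_def by simp
    have "Rd st s v W"
      using IH unfolding Rd_def[of st s u Wq]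
    proof (elim disjE exE conjE)
      fix d' assume "(d', s) \<in> set (knn st u)" "d' \<le> Wq"
      then show ?thesis using ext[of "(d',s)"] by simp
    next
      assume fu: "k \<le> length (knn st u)" and le: "\<forall>e\<in>set (knn st u). fst e \<le> Wq"
      show ?thesis
      proof (cases "k \<le> length (knn st v) \<and> (\<forall>e\<in>set (knn st v). fst e \<le> W)")
        case True then show ?thesis unfolding Rd_def by blast
      next
        case nf: False
        define A where "A = {e \<in> set (knn st v). fst e \<le> W}"
        have sub: "snd ` set (knn st u) \<subseteq> snd ` A"
        proof
          fix x assume "x \<in> snd ` set (knn st u)"
          then obtain e where e: "e \<in> set (knn st u)" "x = snd e" by blast
          have "Rd st (snd e) v W" using ext e le by blast
          then have "\<exists>d. (d, snd e) \<in> set (knn st v) \<and> d \<le> W" using nf unfolding Rd_def by blast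
          then obtain d where "(d, snd e) \<in> set (knn st v)" "d \<le> W" by blast
          then have "(d, snd e) \<in> A" unfolding A_def by simp
          then show "x \<in> snd ` A" using e by (metis image_eqI snd_conv)
        qed
        have c1: "card (snd ` set (knn st u)) = length (knn st u)"
          using distinct_card[of "map snd (knn st u)"] I3[of u] by simp
        have fA: "finite A" unfolding A_def by simp
        have "k \<le> card (snd ` A)" using c1 fu card_mono[OF finite_imageI[OF fA] sub] by simp
        also have "\<dots> \<le> card A" using card_image_le[OF fA] .
        finally have kA: "k \<le> card A" .
        have As: "A \<subseteq> set (knn st v)" unfolding A_def by blast
        have "card (set (knn st v)) \<le> length (knn st v)" by (rule card_length)
        also have "\<dots> \<le> k" using I3[of v] by simp
        finally have "card (set (knn st v)) \<le> card A" using kA by simp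
        then have "A = set (knn st v)" using card_subset_eq[OF _ As] card_mono[OF _ As] by simp
        moreover have "k \<le> length (knn st v)"
          using kA card_mono[OF _ As] card_length[of "knn st v"] by simp
        ultimately show ?thesis using nf unfolding A_def by blast
      qed
    qed
    then show ?thesis using hq WW False unfolding s_def by simp
  qed
qed


lemma gdist_le: assumes "reach s v p" shows "gdist V E w s v \<le> p"
proof -
  obtain q where q: "is_walk V E q" "hd q = s" "last q = v" "walk_weight w q \<le> p"
    using assms unfolding reach_def by blast
  have bdd: "bdd_below {walk_weight w p | p. is_walk V E p \<and> hd p = s \<and> last p = v}"
    by (rule bdd_belowI[of _ 0]) (auto intro: walk_weight_nonneg w_nonneg)
  have "gdist V E w s v \<le> walk_weight w q"
    unfolding gdist_def by (rule cInf_lower[OF _ bdd]) (use q in blast)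
  then show ?thesis using q(4) by simp
qed

lemma gdist_ge:
  assumes "\<And>q. is_walk V E q \<Longrightarrow> hd q = s \<Longrightarrow> last q = v \<Longrightarrow> c \<le> walk_weight w q"
    and "connected_in V E s v"
  shows "c \<le> gdist V E w s v"
  unfolding gdist_def
  by (rule cInf_greatest) (use assms in \<open>auto simp: connected_in_def\<close>)

lemma reach_conn: "reach s v p \<Longrightarrow> connected_in V E s v"
  unfolding reach_def connected_in_def by blast

lemma final_main:
  assumes inv: "invar st" and em: "Q st = Map.empty" and vV: "v \<in> V"
  shows "let Lv = {s \<in> L. connected_in V E s v} in
             \<exists>ss. knn st v = map (\<lambda>s. (gdist V E w s v, s)) ss
                  \<and> distinct ss \<and> set ss \<subseteq> Lv
                  \<and> length ss = min k (card Lv)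
                  \<and> sorted (map (\<lambda>s. gdist V E w s v) ss)
                  \<and> (\<forall>s\<in>Lv - set ss. \<forall>s'\<in>set ss. gdist V E w s' v \<le> gdist V E w s v)"
proof -
  define Lv where "Lv = {s \<in> L. connected_in V E s v}"
  define xs where "xs = knn st v"
  define ss where "ss = map snd xs"
  have I2: "\<And>e. e \<in> set xs \<Longrightarrow> snd e \<in> L \<and> reach (snd e) v (fst e)"
    using inv unfolding invar_def xs_def by blast
  have I3: "distinct ss" "sorted (map fst xs)" "length xs \<le> k"
    using inv unfolding invar_def xs_def ss_def by blast+
  have Rw: "Rd st s v (walk_weight w q)" if "s \<in> L" "is_walk V E q" "hd q = s" "last q = v" for s q
    using final_walk[OF inv em that(2)] that by simp
  have uniq: "a = b" if "a \<in> set xs" "b \<in> set xs" "snd a = snd b" for a b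
    using I3(1) that unfolding ss_def by (metis distinct_map inj_onD)
  have eq: "fst e = gdist V E w (snd e) v" if e: "e \<in> set xs" for e
  proof (rule antisym)
    show "gdist V E w (snd e) v \<le> fst e" using gdist_le I2[OF e] by blast
    show "fst e \<le> gdist V E w (snd e) v"
    proof (rule gdist_ge)
      show "connected_in V E (snd e) v" using reach_conn I2[OF e] by blast
      fix q assume q: "is_walk V E q" "hd q = snd e" "last q = v"
      have "Rd st (snd e) v (walk_weight w q)" using Rw[OF _ q] I2[OF e] q by simp
      then show "fst e \<le> walk_weight w q"
        unfolding Rd_def xs_def[symmetric]
      proof (elim disjE exE conjE)
        fix d' assume "(d', snd e) \<in> set xs" "d' \<le> walk_weight w q"
        then have "e = (d', snd e)" using uniq[OF e, of "(d', snd e)"] by auto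
        then have "fst e = d'" by (metis fst_conv)
        then show ?thesis using \<open>d' \<le> walk_weight w q\<close> by simp
      qed (use e in auto)
    qed
  qed
  have xs_eq: "xs = map (\<lambda>s. (gdist V E w s v, s)) ss"
    unfolding ss_def map_map by (rule sym, rule map_idI) (use eq in \<open>auto simp: prod_eq_iff\<close>)
  have mapeq: "map (\<lambda>s. gdist V E w s v) ss = map fst xs"
    unfolding ss_def map_map by (rule map_cong) (use eq in auto)
  have sub: "set ss \<subseteq> Lv"
    unfolding ss_def Lv_def using I2 reach_conn by fastforce
  have comp: "k \<le> length xs \<and> (\<forall>e\<in>set xs. fst e \<le> gdist V E w s v)"
    if s: "s \<in> Lv" "s \<notin> set ss" for s
  proof -
    have sL: "s \<in> L" and cn: "connected_in V E s v" using s unfolding Lv_def by auto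
    have full: "k \<le> length xs \<and> (\<forall>e\<in>set xs. fst e \<le> walk_weight w q)"
      if q: "is_walk V E q" "hd q = s" "last q = v" for q
    proof -
      have "Rd st s v (walk_weight w q)" using Rw[OF sL q] .
      moreover have "\<not> (\<exists>d. (d,s) \<in> set xs)" using s(2) unfolding ss_def by force
      ultimately show ?thesis unfolding Rd_def xs_def by blast
    qed
    obtain q where q: "is_walk V E q" "hd q = s" "last q = v" using cn unfolding connected_in_def by blast
    have "k \<le> length xs" using full[OF q] by blast
    moreover have "\<forall>e\<in>set xs. fst e \<le> gdist V E w s v"
    proof
      fix e assume "e \<in> set xs"
      then show "fst e \<le> gdist V E w s v" using gdist_ge[OF _ cn] full by blast
    qed
    ultimately show ?thesis by blast
  qed
  have finLv: "finite Lv" unfolding Lv_def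
    by (rule finite_subset[of _ V]) (use L_sub finV in auto)
  have lss: "length ss = card (set ss)" using distinct_card[OF I3(1)] by simp
  have len: "length ss = min k (card Lv)"
  proof (cases "Lv \<subseteq> set ss")
    case True
    then have "set ss = Lv" using sub by blast
    then show ?thesis using lss I3(3) unfolding ss_def by simp
  next
    case False
    then obtain s where "s \<in> Lv" "s \<notin> set ss" by blast
    then have "k \<le> length xs" using comp by blast
    then have "length ss = k" using I3(3) unfolding ss_def by simp
    moreover have "card (set ss) \<le> card Lv" using card_mono[OF finLv sub] .
    ultimately show ?thesis using lss by simp
  qed
  have near: "\<forall>s\<in>Lv - set ss. \<forall>s'\<in>set ss. gdist V E w s' v \<le> gdist V E w s v"
  proof (intro ballI)
    fix s s' assume s: "s \<in> Lv - set ss" and s': "s' \<in> set ss"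
    obtain e where e: "e \<in> set xs" "s' = snd e" using s' unfolding ss_def by auto
    have "fst e \<le> gdist V E w s v" using comp s e(1) by blast
    then show "gdist V E w s' v \<le> gdist V E w s v" using eq[OF e(1)] e(2) by simp
  qed
  have srt: "sorted (map (\<lambda>s. gdist V E w s v) ss)" using mapeq I3(2) by simp
  show ?thesis unfolding Let_def Lv_def[symmetric]
    using xs_eq I3(1) sub len srt near unfolding xs_def by blast
qed

end

theorem theoremB1:
  fixes V :: "'v set" and E :: "('v \<times> 'v) set" and w :: "'v \<Rightarrow> 'v \<Rightarrow> real"
    and L :: "'v set" and k :: nat
  assumes finV: "finite V"
    and E_sub: "E \<subseteq> V \<times> V"
    and E_sym: "sym E"
    and w_sym: "\<And>u v. (u, v) \<in> E \<Longrightarrow> w u v = w v u"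
    and w_nonneg: "\<And>u v. (u, v) \<in> E \<Longrightarrow> 0 \<le> w u v"
    and L_sub: "L \<subseteq> V"
    and k_pos: "k \<ge> 1"
  shows
    "(\<nexists>f. f 0 = alg_init L \<and> (\<forall>i. alg_step E w k (f i) (f (Suc i))))
     \<and> (\<forall>st. (alg_step E w k)\<^sup>*\<^sup>* (alg_init L) st \<and> \<not> (\<exists>st'. alg_step E w k st st')
            \<longrightarrow> alg_stopped st)
     \<and> (\<forall>st. (alg_step E w k)\<^sup>*\<^sup>* (alg_init L) st \<and> alg_stopped st \<longrightarrow>
          (\<forall>v\<in>V. let Lv = {s \<in> L. connected_in V E s v} in
             \<exists>ss. knn st v = map (\<lambda>s. (gdist V E w s v, s)) ss
                  \<and> distinct ss \<and> set ss \<subseteq> Lv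
                  \<and> length ss = min k (card Lv)
                  \<and> sorted (map (\<lambda>s. gdist V E w s v) ss)
                  \<and> (\<forall>s\<in>Lv - set ss. \<forall>s'\<in>set ss. gdist V E w s' v \<le> gdist V E w s v)))"
proof -
  interpret kg V E w L k
    using finV E_sub w_nonneg L_sub by unfold_locales auto
  show ?thesis
  proof (intro conjI allI impI ballI)
    show "\<nexists>f. f 0 = alg_init L \<and> (\<forall>i. alg_step E w k (f i) (f (Suc i)))" by (rule no_inf)
  next
    fix st assume "(alg_step E w k)\<^sup>*\<^sup>* (alg_init L) st \<and> \<not> (\<exists>st'. alg_step E w k st st')"
    then show "alg_stopped st" using stuck reach_invar by blast
  next
    fix st v assume H: "(alg_step E w k)\<^sup>*\<^sup>* (alg_init L) st \<and> alg_stopped st" and v: "v \<in> V"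
    show "let Lv = {s \<in> L. connected_in V E s v} in
             \<exists>ss. knn st v = map (\<lambda>s. (gdist V E w s v, s)) ss
                  \<and> distinct ss \<and> set ss \<subseteq> Lv
                  \<and> length ss = min k (card Lv)
                  \<and> sorted (map (\<lambda>s. gdist V E w s v) ss)
                  \<and> (\<forall>s\<in>Lv - set ss. \<forall>s'\<in>set ss. gdist V E w s' v \<le> gdist V E w s v)"
      using final_main[OF reach_invar[of st] _ v] H unfolding alg_stopped_def by blast
  qed
qed

end
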